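(* Let $\mathbb{G}$ be a linear array, $\mathbb{U}$ the central ULA of its difference coarray, and $\mathbb{F}_r$ ($r\ge1$) the fractal array generated by $\mathbb{G}$. Fix a coupling limit $q\ge0$ and coupling coefficients $c_0=1,c_1,\dots,c_q\in\mathbb{C}$, with $c_k=0$ for $k>q$. Assume $q<\max(\mathbb{G})$ and $q+\max(\mathbb{G})<|\mathbb{U}|$. Then the coupling leakages of $\mathbb{G}$ and $\mathbb{F}_r$ coincide: $\mathcal{L}_{\mathbb{F}_r}=\mathcal{L}_{\mathbb{G}}$.
   Context: A linear array is a finite set $\mathbb{G}\subset\mathbb{Z}$ with $\min\mathbb{G}=0$; its difference coarray is $\mathbb{D}=\{n_1-n_2:n_1,n_2\in\mathbb{G}\}$; its central ULA $\mathbb{U}$ is the largest set $\{-m,\dots,m\}$ contained in $\mathbb{D}$. The fractal array generated by $\mathbb{G}$ (with $M=|\mathbb{U}|$) is $\mathbb{F}_0=\{0\}$, $\mathbb{F}_{r+1}=\bigcup_{n\in\mathbb{G}}(\mathbb{F}_r+nM^r)$ where $A+t=\{a+t:a\in A\}$. For an array $\mathbb{A}=\{a_1<\dots<a_N\}$, its mutual coupling matrix is the $N\times N$ matrix $\mathbf{C}_{\mathbb{A}}$ with entries $(\mathbf{C}_{\mathbb{A}})_{k,l}=c_{|a_k-a_l|}$ (coefficients depend only on sensor separation, $c_0=1$, and $c_d=0$ for $d>q$). Its coupling leakage is $\mathcal{L}_{\mathbb{A}}=\|\mathbf{C}_{\mathbb{A}}-\mathrm{diag}(\mathbf{C}_{\mathbb{A}})\|_F/\|\mathbf{C}_{\mathbb{A}}\|_F$,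 where $\mathrm{diag}(\mathbf{C})$ zeroes all off-diagonal entries and $\|\cdot\|_F$ is the Frobenius norm. *)

theory Defs
  imports "HOL-Analysis.Analysis"
begin

definition linear_array :: "int set \<Rightarrow> bool" where
  "linear_array G \<longleftrightarrow> finite G \<and> G \<noteq> {} \<and> Min G = 0"

definition diff_coarray :: "int set \<Rightarrow> int set" where
  "diff_coarray G = {n1 - n2 | n1 n2. n1 \<in> G \<and> n2 \<in> G}"

definition central_ula_m :: "int set \<Rightarrow> nat" where
  "central_ula_m G = (GREATEST m::nat. {- int m .. int m} \<subseteq> diff_coarray G)"

definition central_ula :: "int set \<Rightarrow> int set" where
  "central_ula G = {- int (central_ula_m G) .. int (central_ula_m G)}"

fun fractal :: "int set \<Rightarrow> int \<Rightarrow> nat \<Rightarrow> int set" where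
  "fractal G M 0 = {0}"
| "fractal G M (Suc r) = (\<Union>n\<in>G. (\<lambda>a. a + n * M ^ r) ` fractal G M r)"

definition fractal_array :: "int set \<Rightarrow> nat \<Rightarrow> int set" where
  "fractal_array G r = fractal G (int (card (central_ula G))) r"

definition coupling_matrix :: "(nat \<Rightarrow> complex) \<Rightarrow> int set \<Rightarrow> nat \<Rightarrow> nat \<Rightarrow> complex" where
  "coupling_matrix c A k l =
     (let xs = sorted_list_of_set A in c (nat \<bar>xs ! k - xs ! l\<bar>))"

definition diag_part :: "(nat \<Rightarrow> nat \<Rightarrow> complex) \<Rightarrow> nat \<Rightarrow> nat \<Rightarrow> complex" where
  "diag_part C k l = (if k = l then C k l else 0)"

definition frob_norm :: "nat \<Rightarrow> (nat \<Rightarrow> nat \<Rightarrow> complex) \<Rightarrow> real" where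
  "frob_norm N C = sqrt (\<Sum>k<N. \<Sum>l<N. (cmod (C k l))\<^sup>2)"

definition coupling_leakage :: "(nat \<Rightarrow> complex) \<Rightarrow> int set \<Rightarrow> real" where
  "coupling_leakage c A =
     (let N = card A; C = coupling_matrix c A
      in frob_norm N (\<lambda>k l. C k l - diag_part C k l) / frob_norm N C)"

end

theory Submission
  imports Defs
begin

definition TT :: "(int \<Rightarrow> real) \<Rightarrow> int set \<Rightarrow> real" where
  "TT w A = (\<Sum>a\<in>A. \<Sum>b\<in>A. w (a - b))"

lemma sum_sorted:
  fixes f :: "int \<Rightarrow> int \<Rightarrow> real"
  assumes "finite A"
  shows "(\<Sum>k<card A. \<Sum>l<card A. f (sorted_list_of_set A ! k) (sorted_list_of_set A ! l))
       = (\<Sum>a\<in>A. \<Sum>b\<in>A. f a b)"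
proof -
  let ?xs = "sorted_list_of_set A"
  have bij: "bij_betw ((!) ?xs) {..<card A} A"
    by (rule bij_betw_nth) (use assms in auto)
  have "(\<Sum>k<card A. \<Sum>l<card A. f (?xs ! k) (?xs ! l)) = (\<Sum>k<card A. \<Sum>b\<in>A. f (?xs ! k) b)"
    by (rule sum.cong[OF refl], rule sum.reindex_bij_betw[OF bij])
  also have "\<dots> = (\<Sum>a\<in>A. \<Sum>b\<in>A. f a b)"
    by (rule sum.reindex_bij_betw[OF bij])
  finally show ?thesis .
qed

lemma leak_formula:
  assumes "finite A" "c 0 = 1"
  shows "coupling_leakage c A =
    sqrt (TT (\<lambda>d. (cmod (c (nat \<bar>d\<bar>)))\<^sup>2) A - card A) / sqrt (TT (\<lambda>d. (cmod (c (nat \<bar>d\<bar>)))\<^sup>2) A)"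
proof -
  let ?xs = "sorted_list_of_set A"
  let ?w = "\<lambda>d::int. (cmod (c (nat \<bar>d\<bar>)))\<^sup>2"
  let ?C = "coupling_matrix c A"
  have dist: "distinct ?xs" and len: "length ?xs = card A" using assms by auto
  have den: "(\<Sum>k<card A. \<Sum>l<card A. (cmod (?C k l))\<^sup>2) = TT ?w A"
    unfolding coupling_matrix_def Let_def TT_def
    using sum_sorted[OF assms(1), of "\<lambda>a b. ?w (a - b)"] by simp
  have "(\<Sum>k<card A. \<Sum>l<card A. (cmod (?C k l - diag_part ?C k l))\<^sup>2)
      = (\<Sum>k<card A. \<Sum>l<card A. (\<lambda>a b. if a = b then 0 else ?w (a - b)) (?xs ! k) (?xs ! l))"
    apply (rule sum.cong[OF refl])+
    using nth_eq_iff_index_eq[OF dist] len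
    by (auto simp: coupling_matrix_def diag_part_def Let_def)
  also have "\<dots> = (\<Sum>a\<in>A. \<Sum>b\<in>A. (if a = b then 0 else ?w (a - b)))"
    by (rule sum_sorted[OF assms(1)])
  also have "\<dots> = (\<Sum>a\<in>A. (\<Sum>b\<in>A. ?w (a - b)) - 1)"
  proof (rule sum.cong[OF refl])
    fix a assume a: "a \<in> A"
    have "(\<Sum>b\<in>A. ?w (a - b)) = ?w (a - a) + (\<Sum>b\<in>A - {a}. ?w (a - b))"
      using sum.remove[OF assms(1) a] by blast
    moreover have "(\<Sum>b\<in>A. (if a = b then 0 else ?w (a - b))) = 0 + (\<Sum>b\<in>A - {a}. ?w (a - b))"
      using sum.remove[OF assms(1) a, of "\<lambda>b. if a = b then 0 else ?w (a - b)"] by simp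
    ultimately show "(\<Sum>b\<in>A. (if a = b then 0 else ?w (a - b))) = (\<Sum>b\<in>A. ?w (a - b)) - 1"
      using assms(2) by simp
  qed
  also have "\<dots> = TT ?w A - card A"
    by (simp add: sum_subtractf TT_def)
  finally have num: "(\<Sum>k<card A. \<Sum>l<card A. (cmod (?C k l - diag_part ?C k l))\<^sup>2) = TT ?w A - card A" .
  show ?thesis unfolding coupling_leakage_def Let_def frob_norm_def num den ..
qed


lemma fractal_finite: "finite G \<Longrightarrow> finite (fractal G M r)"
  by (induction r) auto

lemma fractal_bound:
  assumes G: "\<And>g. g \<in> G \<Longrightarrow> 0 \<le> g \<and> g \<le> mG" and M: "M \<ge> 1"
  shows "x \<in> fractal G M r \<Longrightarrow> 0 \<le> x \<and> (M - 1) * x \<le> mG * (M ^ r - 1)"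
proof (induction r arbitrary: x)
  case 0 then show ?case by simp
next
  case (Suc r)
  then obtain n y where n: "n \<in> G" and y: "y \<in> fractal G M r" and x: "x = y + n * M ^ r" by auto
  have IH: "0 \<le> y" "(M - 1) * y \<le> mG * (M ^ r - 1)" using Suc.IH[OF y] by auto
  have Mr: "M ^ r \<ge> 0" using M by simp
  have "n * M ^ r \<ge> 0" using G[OF n] Mr by simp
  then have "0 \<le> x" using IH x by simp
  have "(M - 1) * (n * M ^ r) \<le> (M - 1) * (mG * M ^ r)"
    using G[OF n] M Mr by (intro mult_left_mono mult_right_mono) auto
  then have "(M - 1) * x \<le> mG * (M ^ r - 1) + (M - 1) * (mG * M ^ r)"
    using IH x by (simp add: algebra_simps)
  also have "\<dots> = mG * (M ^ Suc r - 1)" by (simp add: algebra_simps)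
  finally show ?case using \<open>0 \<le> x\<close> by simp
qed

lemma fractal_close:
  assumes G: "\<And>g. g \<in> G \<Longrightarrow> 0 \<le> g \<and> g \<le> mG" and M: "q + mG < M" and q: "q \<ge> 0" and mG1: "mG \<ge> 1"
    and r: "r \<ge> 1" and a: "a \<in> fractal G M r" and b: "b \<in> fractal G M r"
  shows "\<bar>a - b\<bar> + q < M ^ r"
proof -
  have M2: "M \<ge> 2" using M q mG1 by simp
  have M1: "M \<ge> 1" using M2 by simp
  note A = fractal_bound[OF G M1 a] and B = fractal_bound[OF G M1 b]
  define d where "d = \<bar>a - b\<bar>"
  define P where "P = M ^ r"
  have dle: "d \<le> max a b" using A B unfolding d_def by auto
  have "(M - 1) * d \<le> (M - 1) * max a b" using dle M1 by (intro mult_left_mono) auto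
  also have "\<dots> \<le> mG * (P - 1)" using A B unfolding P_def by (auto simp: max_def)
  finally have h1: "(M - 1) * d \<le> mG * (P - 1)" .
  have PM: "P \<ge> M" unfolding P_def using r M1
    by (metis One_nat_def power_increasing power_one_right)
  have mG0: "mG \<ge> 0 \<or> P - 1 \<ge> 0" using PM M1 by simp
  have "mG * (P - 1) \<le> (M - 1 - q) * (P - 1)"
    using M PM M1 by (intro mult_right_mono) auto
  then have h2: "(M - 1) * d \<le> (M - 1 - q) * (P - 1)" using h1 by simp
  have h3: "q * (P - M) \<ge> 0" using q PM by simp
  have "(M - 1) * (d + q) < (M - 1) * P"
    using h2 h3 M2 PM q by (simp add: algebra_simps)
  then have "d + q < P" using M2
    by (smt (verit, best) mult_le_cancel_left)
  then show ?thesis unfolding d_def P_def .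
qed


lemma fractal_step:
  assumes G: "\<And>g. g \<in> G \<Longrightarrow> 0 \<le> g \<and> g \<le> mG" and M: "q + mG < M" and q: "q \<ge> 0"
    and mG1: "mG \<ge> 1" and r: "r \<ge> 1" and fin: "finite G"
    and w: "\<And>d. q < \<bar>d\<bar> \<Longrightarrow> w d = 0"
  shows "card (fractal G M (Suc r)) = card G * card (fractal G M r)"
    and "TT w (fractal G M (Suc r)) = real (card G) * TT w (fractal G M r)"
proof -
  let ?F = "fractal G M r"
  define h where "h n = (\<lambda>a. a + n * M ^ r)" for n
  have F: "fractal G M (Suc r) = (\<Union>n\<in>G. h n ` ?F)" by (simp add: h_def)
  have finF: "finite ?F" using fractal_finite[OF fin] .
  have inj: "inj_on (h n) A" for n A by (rule inj_onI) (simp add: h_def)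
  have far: "q < \<bar>h n a - h n' b\<bar>" if "n \<in> G" "n' \<in> G" "n \<noteq> n'" "a \<in> ?F" "b \<in> ?F" for n n' a b
  proof -
    have cl: "\<bar>a - b\<bar> + q < M ^ r" using fractal_close[OF G M q mG1 r that(4,5)] .
    have "1 \<le> \<bar>n - n'\<bar>" using that(3) by simp
    moreover have "M ^ r \<ge> 0" using M q mG1 by simp
    ultimately have "M ^ r \<le> \<bar>n - n'\<bar> * M ^ r"
      by (metis mult_le_cancel_right1 not_le order.strict_iff_not)
    also have "\<dots> = \<bar>(n - n') * M ^ r\<bar>" using \<open>M ^ r \<ge> 0\<close> by (simp add: abs_mult)
    finally have "M ^ r \<le> \<bar>(n - n') * M ^ r\<bar>" .
    moreover have "h n a - h n' b = (a - b) + (n - n') * M ^ r" by (simp add: h_def algebra_simps)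
    ultimately show ?thesis using cl by linarith
  qed
  have disj: "h n ` ?F \<inter> h n' ` ?F = {}" if "n \<in> G" "n' \<in> G" "n \<noteq> n'" for n n'
  proof (rule ccontr)
    assume "h n ` ?F \<inter> h n' ` ?F \<noteq> {}"
    then obtain a b where ab: "a \<in> ?F" "b \<in> ?F" "h n a = h n' b" by blast
    have "q < \<bar>h n a - h n' b\<bar>" using far[OF that ab(1,2)] .
    with ab(3) q show False by simp
  qed
  have U: "(\<Sum>x\<in>(\<Union>n\<in>G. h n ` ?F). g x) = (\<Sum>n\<in>G. \<Sum>x\<in>h n ` ?F. g x)" for g :: "int \<Rightarrow> real"
    by (rule sum.UNION_disjoint) (use fin finF disj in auto)
  show "card (fractal G M (Suc r)) = card G * card ?F"
    unfolding F
    apply (subst card_UN_disjoint)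
    using fin finF disj by (auto simp: card_image[OF inj])
  have "TT w (fractal G M (Suc r)) = (\<Sum>n\<in>G. \<Sum>x\<in>h n ` ?F. \<Sum>y\<in>(\<Union>n\<in>G. h n ` ?F). w (x - y))"
    unfolding TT_def F by (rule U)
  also have "\<dots> = (\<Sum>n\<in>G. \<Sum>a\<in>?F. \<Sum>n'\<in>G. \<Sum>b\<in>?F. w (h n a - h n' b))"
  proof (rule sum.cong[OF refl])
    fix n assume "n \<in> G"
    have "(\<Sum>x\<in>h n ` ?F. \<Sum>y\<in>(\<Union>n\<in>G. h n ` ?F). w (x - y))
        = (\<Sum>a\<in>?F. \<Sum>y\<in>(\<Union>n\<in>G. h n ` ?F). w (h n a - y))"
      by (simp add: sum.reindex[OF inj])
    also have "\<dots> = (\<Sum>a\<in>?F. \<Sum>n'\<in>G. \<Sum>y\<in>h n' ` ?F. w (h n a - y))"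
      by (rule sum.cong[OF refl], rule U)
    also have "\<dots> = (\<Sum>a\<in>?F. \<Sum>n'\<in>G. \<Sum>b\<in>?F. w (h n a - h n' b))"
      by (simp add: sum.reindex[OF inj])
    finally show "(\<Sum>x\<in>h n ` ?F. \<Sum>y\<in>(\<Union>n\<in>G. h n ` ?F). w (x - y))
        = (\<Sum>a\<in>?F. \<Sum>n'\<in>G. \<Sum>b\<in>?F. w (h n a - h n' b))" .
  qed
  also have "\<dots> = (\<Sum>n\<in>G. \<Sum>a\<in>?F. \<Sum>b\<in>?F. w (a - b))"
  proof (intro sum.cong[OF refl])
    fix n a assume n: "n \<in> G" and a: "a \<in> ?F"
    have "(\<Sum>n'\<in>G. \<Sum>b\<in>?F. w (h n a - h n' b)) = (\<Sum>b\<in>?F. w (h n a - h n b)) + (\<Sum>n'\<in>G - {n}. \<Sum>b\<in>?F. w (h n a - h n' b))"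
      using sum.remove[OF fin n] by blast
    also have "(\<Sum>n'\<in>G - {n}. \<Sum>b\<in>?F. w (h n a - h n' b)) = 0"
      using far[OF n _ _ a] w by (auto intro!: sum.neutral)
    finally show "(\<Sum>n'\<in>G. \<Sum>b\<in>?F. w (h n a - h n' b)) = (\<Sum>b\<in>?F. w (a - b))"
      by (simp add: h_def)
  qed
  also have "\<dots> = real (card G) * TT w ?F" by (simp add: TT_def)
  finally show "TT w (fractal G M (Suc r)) = real (card G) * TT w ?F" .
qed


theorem theorem7:
  fixes G :: "int set" and r q :: nat and c :: "nat \<Rightarrow> complex"
  assumes "linear_array G"
    and "r \<ge> 1"
    and "c 0 = 1"
    and "\<forall>k>q. c k = 0"
    and "int q < Max G"
    and "int q + Max G < int (card (central_ula G))"
  shows "coupling_leakage c (fractal_array G r) = coupling_leakage c G"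
proof -
  define M where "M = int (card (central_ula G))"
  define mG where "mG = Max G"
  define w where "w d = (cmod (c (nat \<bar>d\<bar>)))\<^sup>2" for d :: int
  have fin: "finite G" and ne: "G \<noteq> {}" and mn: "Min G = 0" using assms(1) unfolding linear_array_def by auto
  have Gb: "0 \<le> g \<and> g \<le> mG" if "g \<in> G" for g
    using that fin mn unfolding mG_def by (metis Max_ge Min_le)
  have Mq: "int q + mG < M" using assms(6) unfolding M_def mG_def .
  have mG1: "mG \<ge> 1" using assms(5) unfolding mG_def by simp
  have q0: "int q \<ge> 0" by simp
  have wz: "w d = 0" if "int q < \<bar>d\<bar>" for d
  proof -
    have "q < nat \<bar>d\<bar>" using that by linarith
    then show ?thesis using assms(4) unfolding w_def by simp
  qed
  have F1: "fractal G M 1 = G" by auto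
  have ind: "card (fractal G M (Suc m)) = card G ^ Suc m \<and> TT w (fractal G M (Suc m)) = real (card G) ^ m * TT w G" for m
  proof (induction m)
    case 0 then show ?case using F1 by simp
  next
    case (Suc m)
    note st = fractal_step[OF Gb Mq q0 mG1 _ fin wz, of "Suc m"]
    show ?case using Suc st by simp
  qed
  obtain m where m: "r = Suc m" using assms(2) by (cases r) auto
  let ?K = "real (card G) ^ m"
  have K: "?K > 0" using fin ne by (simp add: card_gt_0_iff)
  have finF: "finite (fractal_array G r)" unfolding fractal_array_def by (rule fractal_finite[OF fin])
  have eqs: "card (fractal_array G r) = card G ^ Suc m" "TT w (fractal_array G r) = ?K * TT w G"
    using ind[of m] unfolding fractal_array_def m M_def by auto
  have "coupling_leakage c (fractal_array G r) = sqrt (?K * (TT w G - card G)) / sqrt (?K * TT w G)"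
    unfolding leak_formula[where A="fractal_array G r" and c=c, OF finF assms(3)] w_def[symmetric] eqs
    by (simp add: algebra_simps)
  also have "\<dots> = sqrt (TT w G - card G) / sqrt (TT w G)"
    using K by (simp add: real_sqrt_mult)
  also have "\<dots> = coupling_leakage c G"
    unfolding leak_formula[where A=G and c=c, OF fin assms(3)] w_def[symmetric] ..
  finally show ?thesis .
qed

end
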